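(* There is an absolute constant $C>0$ such that the following holds. Let $n\ge 1$ and let $T:\mathbb{C}\times S^1\to\mathbb{C}$ satisfy $\mathrm{Lip}(T_\theta-\mathrm{Id})<4^{-n}$ for every $\theta$. Let $P=(Q,Q')\in A_{j,k,T}$ for some integers $j,k$. Then $\rho_{P,T}:=\int_0^{2\pi}|\mathrm{Proj}_\theta(T_\theta(Q))\cap\mathrm{Proj}_\theta(T_\theta(Q'))|\,d\theta\le C\,4^{k-2n}$.
   Context: Middle-half Cantor set: $\mathcal{C}_0=[0,1]$ and $\mathcal{C}_{n+1}$ is obtained from $\mathcal{C}_n$ by replacing each of its intervals by the first and last quarters of that interval; $\mathcal{K}_n:=\mathcal{C}_n\times\mathcal{C}_n$ is the union of $4^n$ squares ("Cantor squares") of side $4^{-n}$. $T_\theta(z):=T(z,e^{i\theta})$; $\mathrm{Proj}_\theta$ is orthogonal projection onto the line through the origin in direction $e^{i\theta}$ and $|\cdot|$ is one-dimensional Lebesgue measure. In the rotated coordinates $(x,y)$ whose positive $x$-axis makes angle $\arctan(1/2)$ with the standard $x$-axis, $A_{j,k,T}$ is the set of pairs $(Q,Q')$ of Cantor squares such that for some $\theta$ the images $T_\theta(q)=(x_1,y_1)$, $T_\theta(q')=(x_2,y_2)$ of their centers satisfy $4^{-k-1}\le|y_1-y_2|\le 4^{-k}$ and $4^{-j-1}\le\left|\frac{x_1-x_2}{y_1-y_2}\right|\le 4^{-j}$. *)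

theory Defs
  imports "HOL-Analysis.Analysis"
begin

text \<open>Left endpoints of the intervals of the n-th stage C_n of the middle-half Cantor set.
  Each interval [a, a + 4^-n] of C_n is replaced by [a, a + 4^-(n+1)] and
  [a + 3 * 4^-(n+1), a + 4^-n].\<close>
fun cantor_lefts :: "nat \<Rightarrow> real set" where
  "cantor_lefts 0 = {0}"
| "cantor_lefts (Suc n) = cantor_lefts n \<union> (\<lambda>a. a + 3 / 4 ^ Suc n) ` cantor_lefts n"

definition cantor_square :: "nat \<Rightarrow> real \<Rightarrow> real \<Rightarrow> complex set" where
  "cantor_square n a b = cbox (Complex a b) (Complex (a + 1 / 4 ^ n) (b + 1 / 4 ^ n))"

definition square_center :: "nat \<Rightarrow> real \<Rightarrow> real \<Rightarrow> complex" where
  "square_center n a b = Complex (a + 1 / (2 * 4 ^ n)) (b + 1 / (2 * 4 ^ n))"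

definition Tth :: "(complex \<Rightarrow> complex \<Rightarrow> complex) \<Rightarrow> real \<Rightarrow> complex \<Rightarrow> complex" where
  "Tth T \<theta> z = T z (cis \<theta>)"

text \<open>Orthogonal projection onto the line through 0 in direction e^{i theta}, with the line
  identified isometrically with the real line via its coordinate along e^{i theta}.\<close>
definition Proj :: "real \<Rightarrow> complex \<Rightarrow> real" where
  "Proj \<theta> z = z \<bullet> cis \<theta>"

definition rot_x :: "complex \<Rightarrow> real" where
  "rot_x p = Re (p * cis (- arctan (1/2)))"

definition rot_y :: "complex \<Rightarrow> real" where
  "rot_y p = Im (p * cis (- arctan (1/2)))"

definition A_set :: "nat \<Rightarrow> int \<Rightarrow> int \<Rightarrow> (complex \<Rightarrow> complex \<Rightarrow> complex)
    \<Rightarrow> (complex set \<times> complex set) set" where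
  "A_set n j k T = {(cantor_square n a b, cantor_square n a' b') | a b a' b'.
     a \<in> cantor_lefts n \<and> b \<in> cantor_lefts n \<and> a' \<in> cantor_lefts n \<and> b' \<in> cantor_lefts n \<and>
     (\<exists>\<theta>. let p1 = Tth T \<theta> (square_center n a b); p2 = Tth T \<theta> (square_center n a' b');
              x1 = rot_x p1; y1 = rot_y p1; x2 = rot_x p2; y2 = rot_y p2 in
          4 powr (- real_of_int k - 1) \<le> \<bar>y1 - y2\<bar> \<and> \<bar>y1 - y2\<bar> \<le> 4 powr (- real_of_int k) \<and>
          4 powr (- real_of_int j - 1) \<le> \<bar>(x1 - x2) / (y1 - y2)\<bar> \<and>
          \<bar>(x1 - x2) / (y1 - y2)\<bar> \<le> 4 powr (- real_of_int j))}"

definition rho :: "complex set \<times> complex set \<Rightarrow> (complex \<Rightarrow> complex \<Rightarrow> complex) \<Rightarrow> ennreal" where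
  "rho P T = (\<integral>\<^sup>+ \<theta> \<in> {0..2*pi}.
      emeasure lborel ((Proj \<theta> \<circ> Tth T \<theta>) ` fst P \<inter> (Proj \<theta> \<circ> Tth T \<theta>) ` snd P) \<partial>lborel)"

end

theory Submission
  imports Defs
begin

lemma sin_lower:
  fixes y :: real assumes "\<bar>y\<bar> \<le> pi/2"
  shows "\<bar>y\<bar> \<le> 3 * \<bar>sin y\<bar>"
proof -
  have "\<bar>sin y - (\<Sum>m<3. sin_coeff m * y ^ m)\<bar> \<le> inverse (fact 3) * \<bar>y\<bar> ^ 3"
    by (rule Maclaurin_sin_bound)
  moreover have "(\<Sum>m<3. sin_coeff m * y ^ m) = y"
    by (simp add: sin_coeff_def numeral_3_eq_3 lessThan_Suc)
  moreover have f3: "inverse (fact 3) * \<bar>y\<bar> ^ 3 = \<bar>y\<bar> ^ 3 / (6::real)"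
    by (simp add: fact_numeral)
  ultimately have 1: "\<bar>sin y - y\<bar> \<le> \<bar>y\<bar> ^ 3 / 6"
    by simp
  have "\<bar>y\<bar> \<le> 2" using assms pi_less_4 by linarith
  hence "\<bar>y\<bar>^2 \<le> 4" using power_mono[of "\<bar>y\<bar>" 2 2] by simp
  hence "\<bar>y\<bar>^2 * \<bar>y\<bar> \<le> 4 * \<bar>y\<bar>" by (rule mult_right_mono) simp
  moreover have "\<bar>y\<bar>^3 = \<bar>y\<bar>^2 * \<bar>y\<bar>" by (simp add: power3_eq_cube power2_eq_square)
  ultimately have "\<bar>y\<bar>^3 \<le> 4 * \<bar>y\<bar>" by simp
  with 1 show ?thesis by linarith
qed

lemma trig_cover:
  fixes \<theta> \<phi> s :: real
  assumes "\<theta> \<in> {0..2*pi}" "\<bar>cos (\<theta> - \<phi>)\<bar> \<le> s"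
  shows "\<exists>m \<in> {\<lfloor>-\<phi>/pi\<rfloor>..\<lfloor>-\<phi>/pi\<rfloor>+2}. \<theta> \<in> {(\<phi> + pi/2 + of_int m * pi - 3* s) .. (\<phi> + pi/2 + of_int m * pi + 3* s)}"
proof -
  define x where "x = \<theta> - \<phi> - pi/2"
  define m where "m = \<lfloor>x/pi + 1/2\<rfloor>"
  define y where "y = x - of_int m * pi"
  have m1: "of_int m \<le> x/pi + 1/2" "x/pi + 1/2 < of_int m + 1" unfolding m_def by linarith+
  have "of_int m * pi \<le> x + pi/2" using m1(1) pi_gt_zero by (simp add: field_simps)
  moreover have "x + pi/2 < of_int m * pi + pi" using m1(2) pi_gt_zero by (simp add: field_simps)
  ultimately have yb: "\<bar>y\<bar> \<le> pi/2" unfolding y_def by linarith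
  have "cos (\<theta> - \<phi>) = cos (y + of_int m * pi + pi/2)" unfolding y_def x_def by simp
  also have "\<dots> = - sin (y + of_int m * pi)" by (simp add: cos_add)
  also have "\<dots> = - (sin y * cos (pi * of_int m))" by (simp add: sin_add mult.commute)
  finally have "\<bar>cos (\<theta> - \<phi>)\<bar> = \<bar>sin y\<bar>" by (simp add: abs_mult)
  with sin_lower[OF yb] assms have "\<bar>y\<bar> \<le> 3* s" by linarith
  hence mem: "\<theta> \<in> {(\<phi> + pi/2 + of_int m * pi - 3* s) .. (\<phi> + pi/2 + of_int m * pi + 3* s)}"
    unfolding y_def x_def by auto
  have "-\<phi>/pi \<le> x/pi + 1/2" using assms(1) pi_gt_zero unfolding x_def by (simp add: field_simps)
  hence m_lo: "\<lfloor>-\<phi>/pi\<rfloor> \<le> m" unfolding m_def by (rule floor_mono)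
  have "x/pi + 1/2 \<le> -\<phi>/pi + 2" using assms(1) pi_gt_zero unfolding x_def by (simp add: field_simps)
  hence "m \<le> \<lfloor>-\<phi>/pi + 2\<rfloor>" unfolding m_def by (rule floor_mono)
  moreover have "\<lfloor>-\<phi>/pi + 2\<rfloor> = \<lfloor>-\<phi>/pi\<rfloor> + 2" using floor_add_int[of "-\<phi>/pi" 2] by simp
  ultimately have "m \<le> \<lfloor>-\<phi>/pi\<rfloor> + 2" by linarith
  with m_lo show ?thesis using mem by auto
qed

definition U :: "real \<Rightarrow> real \<Rightarrow> real set" where
  "U \<phi> s = (\<Union>m \<in> {\<lfloor>-\<phi>/pi\<rfloor>..\<lfloor>-\<phi>/pi\<rfloor>+2}. {(\<phi> + pi/2 + of_int m * pi - 3* s) .. (\<phi> + pi/2 + of_int m * pi + 3* s)})"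

lemma U_sets: "U \<phi> s \<in> sets lborel"
  unfolding U_def by (intro sets.finite_UN) auto

lemma U_measure: assumes "0 \<le> s" shows "emeasure lborel (U \<phi> s) \<le> ennreal (18 * s)"
proof -
  have "emeasure lborel (U \<phi> s) \<le> (\<Sum>m \<in> {\<lfloor>-\<phi>/pi\<rfloor>..\<lfloor>-\<phi>/pi\<rfloor>+2}. emeasure lborel {(\<phi> + pi/2 + of_int m * pi - 3* s) .. (\<phi> + pi/2 + of_int m * pi + 3* s)})"
    unfolding U_def by (rule emeasure_subadditive_finite) auto
  also have "\<dots> = (\<Sum>m \<in> {\<lfloor>-\<phi>/pi\<rfloor>..\<lfloor>-\<phi>/pi\<rfloor>+2}. ennreal (6* s))"
    using assms by (intro sum.cong) auto
  also have "\<dots> = ennreal 3 * ennreal (6 * s)" by simp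
  also have "\<dots> = ennreal (18 * s)"
    using assms by (subst ennreal_mult[symmetric]) auto
  finally show ?thesis .
qed

lemma cantor_lefts_bound: "a \<in> cantor_lefts n \<Longrightarrow> 0 \<le> a \<and> a + 1/4^n \<le> 1"
proof (induction n arbitrary: a)
  case 0 thus ?case by simp
next
  case (Suc n)
  have e: "1/4^Suc n = (1/4^n::real) / 4" by simp
  have p: "(0::real) < 1/4^n" by simp
  from Suc.prems consider "a \<in> cantor_lefts n" | x where "x \<in> cantor_lefts n" "a = x + 3/4^Suc n" by auto
  then show ?case
  proof cases
    case 1
    have "1/4^n/4 \<le> (1/4^n::real)" using p by (simp add: field_simps)
    with 1 Suc.IH[of a] show ?thesis unfolding e by linarith
  next
    case 2
    have "a + 1/4^Suc n = x + 1/4^n" using 2(2) by (simp add: field_simps)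
    moreover have "0 \<le> 3/(4::real)^Suc n" by simp
    ultimately show ?thesis using Suc.IH[OF 2(1)] 2(2) by linarith
  qed
qed

lemma square_close:
  assumes "z \<in> cantor_square n a b"
  shows "cmod (z - square_center n a b) \<le> 1/4^n"
proof -
  define h where "h = (1::real)/4^n"
  have "Re z \<in> {a..a+h} \<and> Im z \<in> {b..b+h}"
    using assms unfolding cantor_square_def h_def
    by (auto simp: in_cbox_complex_iff)
  hence "\<bar>Re (z - square_center n a b)\<bar> \<le> h/2" "\<bar>Im (z - square_center n a b)\<bar> \<le> h/2"
    unfolding square_center_def h_def by auto
  thus ?thesis using cmod_le[of "z - square_center n a b"] unfolding h_def by linarith
qed

lemma inner_rcis:
  fixes d \<phi> \<theta> :: real
  shows "(complex_of_real d * cis \<phi>) \<bullet> cis \<theta> = d * cos (\<theta> - \<phi>)"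
  by (simp add: inner_complex_def cos_diff algebra_simps)

lemma proj_close: "\<bar>Proj \<theta> u - Proj \<theta> v\<bar> \<le> cmod (u - v)"
  unfolding Proj_def inner_diff_left[symmetric]
  using Cauchy_Schwarz_ineq2[of "u - v" "cis \<theta>"] by simp

lemma roty_close: "\<bar>rot_y p - rot_y p'\<bar> \<le> cmod (p - p')"
proof -
  have "rot_y p - rot_y p' = Im ((p - p') * cis (- arctan (1/2)))"
    unfolding rot_y_def by (simp add: left_diff_distrib)
  also have "\<bar>\<dots>\<bar> \<le> cmod ((p - p') * cis (- arctan (1/2)))" by (rule abs_Im_le_cmod)
  also have "\<dots> = cmod (p - p')" by (simp add: norm_mult)
  finally show ?thesis .
qed

lemma pow_id: "(4::real) powr (real_of_int k - 2 * real n) = 4 powr real_of_int k * (1/4^n)^2"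
proof -
  have e: "(4::real) powr (2 * real n) = (4^n)^2"
    using powr_realpow[of 4 "2*n"] by (simp add: power_mult mult.commute)
  have "(4::real) powr (real_of_int k - 2 * real n) = 4 powr real_of_int k / 4 powr (2 * real n)"
    by (rule powr_diff)
  also have "\<dots> = 4 powr real_of_int k / (4^n)^2" by (simp only: e)
  also have "\<dots> = 4 powr real_of_int k * (1/4^n)^2" by (simp only: power_one_over divide_inverse mult_1_left power_inverse)
  finally show ?thesis .
qed

lemma pow_id2: "(4::real) powr (- real_of_int k - 1) = 1 / (4 * 4 powr real_of_int k)"
proof -
  have "(4::real) powr (- real_of_int k - 1) = 4 powr (- real_of_int k) / 4 powr 1" by (rule powr_diff)
  also have "\<dots> = inverse (4 powr real_of_int k) / 4" by (simp only: powr_minus powr_one' abs_numeral)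
  also have "\<dots> = 1 / (4 * 4 powr real_of_int k)" by (simp add: field_simps)
  finally show ?thesis .
qed

theorem lemma5:
  "\<exists>C>0. \<forall>(n::nat) (T::complex \<Rightarrow> complex \<Rightarrow> complex) (j::int) (k::int) P.
     n \<ge> 1 \<longrightarrow>
     (\<forall>\<theta>. \<exists>L < 1 / 4 ^ n. lipschitz_on L UNIV (\<lambda>z. Tth T \<theta> z - z)) \<longrightarrow>
     P \<in> A_set n j k T \<longrightarrow>
     rho P T \<le> ennreal (C * 4 powr (real_of_int k - 2 * real n))"
proof (intro exI[of _ 4000] conjI allI impI)
  show "0 < (4000::real)" by simp
  fix n T j k P
  assume lipT: "\<forall>\<theta>. \<exists>L < 1 / 4 ^ n. lipschitz_on L UNIV (\<lambda>z. Tth T \<theta> z - z)"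
    and PA: "P \<in> A_set n j k T"
  define h where "h = (1::real)/4^n"
  have hpos: "0 < h" unfolding h_def by simp
  have hle: "h \<le> 1" unfolding h_def by simp
  have lip: "cmod ((Tth T \<theta> z - z) - (Tth T \<theta> w - w)) \<le> h * cmod (z - w)" for \<theta> z w
  proof -
    obtain L where L: "L < 1/4^n" "lipschitz_on L UNIV (\<lambda>z. Tth T \<theta> z - z)" using lipT by blast
    have "dist (Tth T \<theta> z - z) (Tth T \<theta> w - w) \<le> L * dist z w"
      using lipschitz_onD[OF L(2)] by auto
    also have "\<dots> \<le> h * dist z w" using L(1) unfolding h_def by (intro mult_right_mono) auto
    finally show ?thesis by (simp add: dist_norm)
  qed
  have Tlip: "cmod (Tth T \<theta> z - Tth T \<theta> w) \<le> 2 * cmod (z - w)" for \<theta> z w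
  proof -
    have "Tth T \<theta> z - Tth T \<theta> w = (z - w) + ((Tth T \<theta> z - z) - (Tth T \<theta> w - w))" by simp
    hence "cmod (Tth T \<theta> z - Tth T \<theta> w) \<le> cmod (z - w) + cmod ((Tth T \<theta> z - z) - (Tth T \<theta> w - w))"
      by (metis norm_triangle_ineq)
    also have "\<dots> \<le> cmod (z - w) + h * cmod (z - w)" using lip[of \<theta> z w] by simp
    also have "\<dots> \<le> 2 * cmod (z - w)" using hle mult_right_mono[OF hle, of "cmod (z - w)"] by simp
    finally show ?thesis .
  qed
  obtain a b a' b' where P: "P = (cantor_square n a b, cantor_square n a' b')"
    and ab: "a \<in> cantor_lefts n" "b \<in> cantor_lefts n" "a' \<in> cantor_lefts n" "b' \<in> cantor_lefts n"
    and ex: "\<exists>\<theta>. let p1 = Tth T \<theta> (square_center n a b); p2 = Tth T \<theta> (square_center n a' b');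
              x1 = rot_x p1; y1 = rot_y p1; x2 = rot_x p2; y2 = rot_y p2 in
          4 powr (- real_of_int k - 1) \<le> \<bar>y1 - y2\<bar> \<and> \<bar>y1 - y2\<bar> \<le> 4 powr (- real_of_int k) \<and>
          4 powr (- real_of_int j - 1) \<le> \<bar>(x1 - x2) / (y1 - y2)\<bar> \<and>
          \<bar>(x1 - x2) / (y1 - y2)\<bar> \<le> 4 powr (- real_of_int j)"
    using PA unfolding A_set_def mem_Collect_eq apply (elim exE conjE) apply (rule that) apply assumption+ apply (rule exI, assumption) done
  from ex obtain \<theta>0 where "let p1 = Tth T \<theta>0 (square_center n a b); p2 = Tth T \<theta>0 (square_center n a' b');
              x1 = rot_x p1; y1 = rot_y p1; x2 = rot_x p2; y2 = rot_y p2 in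
          4 powr (- real_of_int k - 1) \<le> \<bar>y1 - y2\<bar> \<and> \<bar>y1 - y2\<bar> \<le> 4 powr (- real_of_int k) \<and>
          4 powr (- real_of_int j - 1) \<le> \<bar>(x1 - x2) / (y1 - y2)\<bar> \<and>
          \<bar>(x1 - x2) / (y1 - y2)\<bar> \<le> 4 powr (- real_of_int j)" by (rule exE)
  hence y0: "4 powr (- real_of_int k - 1) \<le> \<bar>rot_y (Tth T \<theta>0 (square_center n a b)) - rot_y (Tth T \<theta>0 (square_center n a' b'))\<bar>"
    unfolding Let_def by (elim conjE) assumption
  define q where "q = square_center n a b"
  define q' where "q' = square_center n a' b'"
  define K where "K = (4::real) powr real_of_int k"
  have Kpos: "0 < K" unfolding K_def by simp
  define d where "d = cmod (q - q')"
  have "1 / (4 * K) \<le> 2 * d"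
    using y0 pow_id2[of k] roty_close[of "Tth T \<theta>0 q" "Tth T \<theta>0 q'"] Tlip[of \<theta>0 q q']
    unfolding K_def d_def q_def q'_def by linarith
  hence dK: "1 / d \<le> 8 * K" and dpos: "0 < d"
  proof -
    have "0 < 1 / (4*K)" using Kpos by simp
    with \<open>1 / (4 * K) \<le> 2 * d\<close> show dp: "0 < d" by linarith
    from \<open>1 / (4 * K) \<le> 2 * d\<close> have "1 \<le> 8 * K * d" using Kpos by (simp add: field_simps)
    thus "1 / d \<le> 8 * K" using dp by (simp add: field_simps)
  qed
  have d2: "d \<le> 2"
  proof -
    have "q - q' = Complex (a - a') (b - b')" unfolding q_def q'_def square_center_def
      by (simp add: complex_eq_iff)
    moreover have "\<bar>a - a'\<bar> \<le> 1" "\<bar>b - b'\<bar> \<le> 1"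
      using cantor_lefts_bound[OF ab(1)] cantor_lefts_bound[OF ab(2)]
        cantor_lefts_bound[OF ab(3)] cantor_lefts_bound[OF ab(4)] hpos unfolding h_def by linarith+
    ultimately show ?thesis using cmod_le[of "q - q'"] unfolding d_def by simp
  qed
  define \<phi> where "\<phi> = Arg (q - q')"
  have qq: "q - q' = complex_of_real d * cis \<phi>"
    using rcis_cmod_Arg[of "q - q'"] unfolding rcis_def d_def \<phi>_def by simp
  define s where "s = (4*h + h*d)/d"
  have spos: "0 \<le> s" unfolding s_def using hpos dpos by simp
  have pw: "emeasure lborel ((Proj \<theta> \<circ> Tth T \<theta>) ` fst P \<inter> (Proj \<theta> \<circ> Tth T \<theta>) ` snd P) * indicator {0..2*pi} \<theta>
      \<le> ennreal (4*h) * indicator (U \<phi> s) \<theta>" for \<theta>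
  proof (cases "\<theta> \<in> {0..2*pi} \<and> (Proj \<theta> \<circ> Tth T \<theta>) ` fst P \<inter> (Proj \<theta> \<circ> Tth T \<theta>) ` snd P \<noteq> {}")
    case False
    note nf = False
    show ?thesis
    proof (cases "\<theta> \<in> {0..2*pi}")
      case False thus ?thesis by simp
    next
      case True
      with nf have "(Proj \<theta> \<circ> Tth T \<theta>) ` fst P \<inter> (Proj \<theta> \<circ> Tth T \<theta>) ` snd P = {}" by blast
      thus ?thesis by simp
    qed
  next
    case True
    then obtain z z' where z: "z \<in> cantor_square n a b" "z' \<in> cantor_square n a' b'"
      and zz: "Proj \<theta> (Tth T \<theta> z) = Proj \<theta> (Tth T \<theta> z')" unfolding P by auto
    define p1 where "p1 = Proj \<theta> (Tth T \<theta> q)"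
    define p2 where "p2 = Proj \<theta> (Tth T \<theta> q')"
    have close1: "\<bar>Proj \<theta> (Tth T \<theta> w) - p1\<bar> \<le> 2*h" if "w \<in> cantor_square n a b" for w
      using proj_close[of \<theta> "Tth T \<theta> w" "Tth T \<theta> q"] Tlip[of \<theta> w q] square_close[OF that]
      unfolding p1_def q_def h_def by linarith
    have close2: "\<bar>Proj \<theta> (Tth T \<theta> w) - p2\<bar> \<le> 2*h" if "w \<in> cantor_square n a' b'" for w
      using proj_close[of \<theta> "Tth T \<theta> w" "Tth T \<theta> q'"] Tlip[of \<theta> w q'] square_close[OF that]
      unfolding p2_def q'_def h_def by linarith
    have "\<bar>p1 - p2\<bar> \<le> 4*h" using close1[OF z(1)] close2[OF z(2)] zz by linarith
    moreover have "p1 - p2 = (q - q') \<bullet> cis \<theta> + ((Tth T \<theta> q - q) - (Tth T \<theta> q' - q')) \<bullet> cis \<theta>"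
      unfolding p1_def p2_def Proj_def by (simp add: inner_diff_left inner_add_left)
    moreover have "\<bar>((Tth T \<theta> q - q) - (Tth T \<theta> q' - q')) \<bullet> cis \<theta>\<bar> \<le> h * d"
      using Cauchy_Schwarz_ineq2[of "(Tth T \<theta> q - q) - (Tth T \<theta> q' - q')" "cis \<theta>"] lip[of \<theta> q q']
      unfolding d_def by simp
    ultimately have "\<bar>d * cos (\<theta> - \<phi>)\<bar> \<le> 4*h + h*d" unfolding qq inner_rcis by linarith
    hence "\<bar>cos (\<theta> - \<phi>)\<bar> * d \<le> 4*h + h*d" using dpos by (simp add: abs_mult mult.commute)
    hence "\<bar>cos (\<theta> - \<phi>)\<bar> \<le> s" unfolding s_def using dpos by (simp add: pos_le_divide_eq)
    hence inU: "\<theta> \<in> U \<phi> s" using trig_cover[of \<theta> \<phi> s] True unfolding U_def by blast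
    have "(Proj \<theta> \<circ> Tth T \<theta>) ` fst P \<inter> (Proj \<theta> \<circ> Tth T \<theta>) ` snd P \<subseteq> {p1 - 2*h .. p1 + 2*h}"
    proof
      fix r assume "r \<in> (Proj \<theta> \<circ> Tth T \<theta>) ` fst P \<inter> (Proj \<theta> \<circ> Tth T \<theta>) ` snd P"
      then obtain w where w: "w \<in> cantor_square n a b" "r = Proj \<theta> (Tth T \<theta> w)" unfolding P by auto
      from close1[OF w(1)] w(2) show "r \<in> {p1 - 2*h .. p1 + 2*h}" by (simp add: abs_le_iff)
    qed
    hence "emeasure lborel ((Proj \<theta> \<circ> Tth T \<theta>) ` fst P \<inter> (Proj \<theta> \<circ> Tth T \<theta>) ` snd P)
        \<le> emeasure lborel {p1 - 2*h .. p1 + 2*h}" by (intro emeasure_mono) auto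
    also have "\<dots> = ennreal (4*h)" using hpos by simp
    finally show ?thesis using inU True by simp
  qed
  have "rho P T = (\<integral>\<^sup>+ \<theta>. emeasure lborel ((Proj \<theta> \<circ> Tth T \<theta>) ` fst P \<inter> (Proj \<theta> \<circ> Tth T \<theta>) ` snd P) * indicator {0..2*pi} \<theta> \<partial>lborel)"
    unfolding rho_def by simp
  also have "\<dots> \<le> (\<integral>\<^sup>+ \<theta>. ennreal (4*h) * indicator (U \<phi> s) \<theta> \<partial>lborel)"
    by (intro nn_integral_mono pw)
  also have "\<dots> = ennreal (4*h) * emeasure lborel (U \<phi> s)"
    by (rule nn_integral_cmult_indicator[OF U_sets])
  also have "\<dots> \<le> ennreal (4*h) * ennreal (18 * s)"
    by (intro mult_left_mono U_measure spos) auto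
  also have "\<dots> = ennreal (72 * h * s)" using hpos spos by (simp add: ennreal_mult[symmetric])
  also have "\<dots> \<le> ennreal (4000 * 4 powr (real_of_int k - 2 * real n))"
  proof (rule ennreal_leI)
    have "72 * h * s = 72 * h^2 * ((4 + d) / d)" unfolding s_def using dpos
      by (simp add: field_simps power2_eq_square)
    also have "\<dots> \<le> 72 * h^2 * (6 / d)" using d2 dpos hpos
      by (intro mult_left_mono divide_right_mono) auto
    also have "\<dots> = 432 * h^2 * (1 / d)" by simp
    also have "\<dots> \<le> 432 * h^2 * (8 * K)" using dK hpos by (intro mult_left_mono) auto
    also have "\<dots> \<le> 4000 * (K * h^2)" using Kpos hpos by simp
    finally show "72 * h * s \<le> 4000 * 4 powr (real_of_int k - 2 * real n)"
      unfolding pow_id K_def h_def by simp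
  qed
  finally show "rho P T \<le> ennreal (4000 * 4 powr (real_of_int k - 2 * real n))" .
qed

end
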